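(* Let $E$ be a finite set and $\underline I=(I_\omega)_{\omega\in E}$ a family of non-empty finite sets. For causal orders $\Omega,\Omega'$ on $E$, $$\mathrm{ExtHist}(\Omega,\underline I)\cap\mathrm{ExtHist}(\Omega',\underline I)=\mathrm{ExtHist}(\Omega\vee\Omega',\underline I)\quad\text{and}\quad \mathrm{Hist}(\Omega,\underline I)\vee\mathrm{Hist}(\Omega',\underline I)=\mathrm{Hist}(\Omega\vee\Omega',\underline I).$$
   Context: A causal order $\Omega$ on $E$ is a preorder $\le_\Omega$; $\downarrow\omega=\{\xi:\xi\le_\Omega\omega\}$; $\Lambda(\Omega)$ is its set of lowersets. $\Omega\vee\Omega'$ is the order whose relation is the transitive closure of $\le_\Omega\cup\le_{\Omega'}$. Partial functions on $\underline I$: $f$ with $\mathrm{dom}(f)\subseteq E$, $f(\omega)\in I_\omega$. $\mathrm{Hist}(\Omega,\underline I)=\bigcup_{\xi\in E}\prod_{\omega\in\downarrow\xi}I_\omega$; $\mathrm{ExtHist}(\Omega,\underline I)=\bigcup_{U\in\Lambda(\Omega)}\prod_{\omega\in U}I_\omega$. Compatible = agreeing on common domain; compatible sets $\mathcal F$ have join $\bigvee\mathcal F$ (union). For a set $\Theta$, $\mathrm{Ext}(\Theta)=\{\bigvee\mathcal F:\emptyset\ne\mathcal F\subseteq\Theta\text{ compatible}\}$; for a set $W$, $\mathrm{Prime}(W)=\{w\in W:\text{for all compatible }\mathcal F\subseteq W,\ w=\bigvee\mathcal F\Rightarrow w\in\mathcal F\}$. The join of spaces of input histories is $\Theta\vee\Theta'=\mathrm{Prime}(\mathrm{Ext}(\Theta)\cap\mathrm{Ext}(\Theta'))$.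 *)

theory Defs
  imports Main
begin

text \<open>A causal order on E: a preorder, given as a relation R on E
  ((x,y) \<in> R means x \<le> y).\<close>
definition causal_order :: "'a set \<Rightarrow> ('a \<times> 'a) set \<Rightarrow> bool" where
  "causal_order E R \<longleftrightarrow> R \<subseteq> E \<times> E \<and> (\<forall>x\<in>E. (x, x) \<in> R) \<and> trans R"

definition order_join :: "('a \<times> 'a) set \<Rightarrow> ('a \<times> 'a) set \<Rightarrow> ('a \<times> 'a) set" where
  "order_join R R' = (R \<union> R')\<^sup>+"

definition down :: "('a \<times> 'a) set \<Rightarrow> 'a \<Rightarrow> 'a set" where
  "down R w = {x. (x, w) \<in> R}"

definition lowersets :: "'a set \<Rightarrow> ('a \<times> 'a) set \<Rightarrow> 'a set set" where
  "lowersets E R = {U. U \<subseteq> E \<and> (\<forall>w\<in>U. \<forall>x. (x, w) \<in> R \<longrightarrow> x \<in> U)}"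

definition prod_on :: "'a set \<Rightarrow> ('a \<Rightarrow> 'b set) \<Rightarrow> ('a \<rightharpoonup> 'b) set" where
  "prod_on U I = {f. dom f = U \<and> (\<forall>w\<in>U. the (f w) \<in> I w)}"

definition Hist :: "'a set \<Rightarrow> ('a \<times> 'a) set \<Rightarrow> ('a \<Rightarrow> 'b set) \<Rightarrow> ('a \<rightharpoonup> 'b) set" where
  "Hist E R I = (\<Union>x\<in>E. prod_on (down R x) I)"

definition ExtHist :: "'a set \<Rightarrow> ('a \<times> 'a) set \<Rightarrow> ('a \<Rightarrow> 'b set) \<Rightarrow> ('a \<rightharpoonup> 'b) set" where
  "ExtHist E R I = (\<Union>U\<in>lowersets E R. prod_on U I)"

definition compatible :: "('a \<rightharpoonup> 'b) set \<Rightarrow> bool" where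
  "compatible F \<longleftrightarrow> (\<forall>f\<in>F. \<forall>g\<in>F. \<forall>x\<in>dom f \<inter> dom g. f x = g x)"

text \<open>Join (union) of a set of partial functions (meaningful for compatible sets).\<close>
definition map_join :: "('a \<rightharpoonup> 'b) set \<Rightarrow> ('a \<rightharpoonup> 'b)" where
  "map_join F = (\<lambda>x. if \<exists>f\<in>F. x \<in> dom f then Some (THE y. \<exists>f\<in>F. f x = Some y) else None)"

definition Ext :: "('a \<rightharpoonup> 'b) set \<Rightarrow> ('a \<rightharpoonup> 'b) set" where
  "Ext \<Theta> = {map_join F | F. F \<noteq> {} \<and> F \<subseteq> \<Theta> \<and> compatible F}"

definition Prime :: "('a \<rightharpoonup> 'b) set \<Rightarrow> ('a \<rightharpoonup> 'b) set" where
  "Prime W = {w \<in> W. \<forall>F. F \<subseteq> W \<and> compatible F \<and> w = map_join F \<longrightarrow> w \<in> F}"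

definition hist_join :: "('a \<rightharpoonup> 'b) set \<Rightarrow> ('a \<rightharpoonup> 'b) set \<Rightarrow> ('a \<rightharpoonup> 'b) set" where
  "hist_join \<Theta> \<Theta>' = Prime (Ext \<Theta> \<inter> Ext \<Theta>')"

end

theory Submission
  imports Defs
begin

lemma mj_dom: "dom (map_join F) = (\<Union>g\<in>F. dom g)"
  unfolding map_join_def dom_def by auto

lemma mj_val:
  assumes "compatible F" "g \<in> F" "g x = Some y"
  shows "map_join F x = Some y"
proof -
  have ex: "\<exists>f\<in>F. x \<in> dom f" using assms(2,3) by blast
  have "(THE y. \<exists>f\<in>F. f x = Some y) = y"
  proof (rule the_equality)
    show "\<exists>f\<in>F. f x = Some y" using assms(2,3) by blast
  next
    fix z assume "\<exists>f\<in>F. f x = Some z"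
    then obtain f where f: "f \<in> F" "f x = Some z" by blast
    have "x \<in> dom f \<inter> dom g" using f(2) assms(3) by blast
    then have "f x = g x" using assms(1,2) f(1) unfolding compatible_def by blast
    then show "z = y" using f(2) assms(3) by simp
  qed
  then show ?thesis using ex unfolding map_join_def by simp
qed

lemma restr_le: "g \<in> {f |` A x | x. P x} \<Longrightarrow> g \<subseteq>\<^sub>m f"
proof -
  assume "g \<in> {f |` A x | x. P x}"
  then obtain x where "g = f |` A x" by blast
  then show ?thesis by (simp add: map_le_def)
qed

lemma compat_sub: "(\<And>g. g \<in> F \<Longrightarrow> g \<subseteq>\<^sub>m f) \<Longrightarrow> compatible F"
  unfolding compatible_def map_le_def by (metis IntD1 IntD2)

lemma restr_join:
  assumes "\<And>x. x \<in> dom f \<Longrightarrow> x \<in> down R x"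
  shows "map_join {f |` down R x | x. x \<in> dom f} = f"
proof (rule ext)
  fix y
  let ?F = "{f |` down R x | x. x \<in> dom f}"
  have c: "compatible ?F" by (rule compat_sub[where f=f], rule restr_le)
  show "map_join ?F y = f y"
  proof (cases "y \<in> dom f")
    case True
    then obtain z where z: "f y = Some z" by auto
    have m: "f |` down R y \<in> ?F" using True by blast
    have v: "(f |` down R y) y = Some z" using assms[OF True] z by simp
    show ?thesis using mj_val[OF c m v] z by simp
  next
    case False
    have "y \<notin> dom g" if "g \<in> ?F" for g
      using map_le_implies_dom_le[OF restr_le[OF that]] False by blast
    then have "y \<notin> dom (map_join ?F)" unfolding mj_dom by blast
    then have "map_join ?F y = None" by (simp add: domIff)
    moreover have "f y = None" using False by (simp add: domIff)
    ultimately show ?thesis by simp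
  qed
qed

lemma ExtHist_iff: "f \<in> ExtHist E R I \<longleftrightarrow> dom f \<in> lowersets E R \<and> (\<forall>w\<in>dom f. the (f w) \<in> I w)"
  unfolding ExtHist_def prod_on_def by auto

lemma co_down_low: "causal_order E R \<Longrightarrow> x \<in> E \<Longrightarrow> down R x \<in> lowersets E R \<and> x \<in> down R x"
  unfolding causal_order_def lowersets_def down_def trans_def by blast

lemma low_down_sub: "U \<in> lowersets E R \<Longrightarrow> x \<in> U \<Longrightarrow> down R x \<subseteq> U"
  unfolding lowersets_def down_def by blast

lemma low_Union: "(\<And>U. U \<in> S \<Longrightarrow> U \<in> lowersets E R) \<Longrightarrow> \<Union>S \<in> lowersets E R"
  unfolding lowersets_def by blast

lemma Ext_Hist:
  assumes co: "causal_order E R"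
  shows "Ext (Hist E R I) = {f \<in> ExtHist E R I. dom f \<noteq> {}}"
proof
  show "Ext (Hist E R I) \<subseteq> {f \<in> ExtHist E R I. dom f \<noteq> {}}"
  proof
    fix f assume "f \<in> Ext (Hist E R I)"
    then obtain F where F: "f = map_join F" "F \<noteq> {}" "F \<subseteq> Hist E R I" "compatible F"
      unfolding Ext_def by blast
    have gH: "\<exists>x\<in>E. dom g = down R x \<and> (\<forall>w\<in>dom g. the (g w) \<in> I w)" if "g \<in> F" for g
      using F(3) that unfolding Hist_def prod_on_def by blast
    have df: "dom f = (\<Union>g\<in>F. dom g)" using F(1) mj_dom by simp
    have "dom f \<in> lowersets E R"
    proof -
      have "dom g \<in> lowersets E R" if gF: "g \<in> F" for g
      proof -
        obtain x where "x \<in> E" "dom g = down R x" using gH[OF gF] by blast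
        then show ?thesis using co_down_low[OF co] by simp
      qed
      then show ?thesis unfolding df by (intro low_Union) auto
    qed
    moreover have "the (f w) \<in> I w" if wd: "w \<in> dom f" for w
    proof -
      obtain g where g: "g \<in> F" "w \<in> dom g" using wd df by auto
      then obtain z where "g w = Some z" by auto
      then have "f w = g w" using mj_val[OF F(4) g(1)] F(1) by simp
      then show ?thesis using gH[OF g(1)] g(2) by auto
    qed
    moreover have "dom f \<noteq> {}"
    proof -
      obtain g where g: "g \<in> F" using F(2) by auto
      then obtain x where "x \<in> E" "dom g = down R x" using gH by blast
      then have "x \<in> dom g" using co_down_low[OF co] by blast
      then show ?thesis using df g by blast
    qed
    ultimately show "f \<in> {f \<in> ExtHist E R I. dom f \<noteq> {}}" by (simp add: ExtHist_iff)
  qed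
next
  show "{f \<in> ExtHist E R I. dom f \<noteq> {}} \<subseteq> Ext (Hist E R I)"
  proof
    fix f assume "f \<in> {f \<in> ExtHist E R I. dom f \<noteq> {}}"
    then have L: "dom f \<in> lowersets E R" and V: "\<forall>w\<in>dom f. the (f w) \<in> I w" and ne: "dom f \<noteq> {}"
      by (auto simp: ExtHist_iff)
    have sE: "dom f \<subseteq> E" using L unfolding lowersets_def by blast
    have xin: "x \<in> down R x" if "x \<in> dom f" for x using co_down_low[OF co] sE that by blast
    let ?F = "{f |` down R x | x. x \<in> dom f}"
    have "f = map_join ?F" using restr_join[of f R, OF xin] by simp
    moreover have "?F \<noteq> {}" using ne by blast
    moreover have "?F \<subseteq> Hist E R I"
    proof
      fix g assume "g \<in> ?F"
      then obtain x where x: "x \<in> dom f" "g = f |` down R x" by blast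
      have "dom g = down R x" using x low_down_sub[OF L x(1)] by auto
      moreover have "\<forall>w\<in>dom g. the (g w) \<in> I w" using V x by (auto simp: restrict_map_def split: if_splits)
      ultimately have "g \<in> prod_on (down R x) I" unfolding prod_on_def by simp
      moreover have "x \<in> E" using x sE by blast
      ultimately show "g \<in> Hist E R I" unfolding Hist_def by blast
    qed
    moreover have "compatible ?F" by (rule compat_sub[where f=f], rule restr_le)
    ultimately have "\<exists>F. f = map_join F \<and> F \<noteq> {} \<and> F \<subseteq> Hist E R I \<and> compatible F" by (intro exI[of _ ?F] conjI)
    then show "f \<in> Ext (Hist E R I)" unfolding Ext_def by blast
  qed
qed

lemma Prime_Hist:
  assumes co: "causal_order E J"
  shows "Prime {f \<in> ExtHist E J I. dom f \<noteq> {}} = Hist E J I"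
proof
  let ?W = "{f \<in> ExtHist E J I. dom f \<noteq> {}}"
  show "Prime {f \<in> ExtHist E J I. dom f \<noteq> {}} \<subseteq> Hist E J I"
  proof
    fix f assume fP: "f \<in> Prime {f \<in> ExtHist E J I. dom f \<noteq> {}}"
    then have L: "dom f \<in> lowersets E J" and V: "\<forall>w\<in>dom f. the (f w) \<in> I w" and ne: "dom f \<noteq> {}"
      unfolding Prime_def by (auto simp: ExtHist_iff)
    have sE: "dom f \<subseteq> E" using L unfolding lowersets_def by blast
    have xin: "x \<in> down J x" if "x \<in> dom f" for x using co_down_low[OF co] sE that by blast
    let ?F = "{f |` down J x | x. x \<in> dom f}"
    have j: "f = map_join ?F" using restr_join[of f J, OF xin] by simp
    have dg: "dom (f |` down J x) = down J x" if "x \<in> dom f" for x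
      using low_down_sub[OF L that] by auto
    have "?F \<subseteq> ?W"
    proof
      fix g assume "g \<in> ?F"
      then obtain x where x: "x \<in> dom f" "g = f |` down J x" by blast
      have "dom g \<in> lowersets E J" "dom g \<noteq> {}" using dg[OF x(1)] x co_down_low[OF co] sE by auto
      moreover have "\<forall>w\<in>dom g. the (g w) \<in> I w" using V x by (auto simp: restrict_map_def split: if_splits)
      ultimately show "g \<in> ?W" by (simp add: ExtHist_iff)
    qed
    moreover have "compatible ?F" by (rule compat_sub[where f=f], rule restr_le)
    ultimately have "f \<in> ?F" using fP j unfolding Prime_def by blast
    then obtain x where x: "x \<in> dom f" "f = f |` down J x" by blast
    then have "dom f = down J x" using dg by metis
    then show "f \<in> Hist E J I" unfolding Hist_def prod_on_def using x sE V by blast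
  qed
next
  let ?W = "{f \<in> ExtHist E J I. dom f \<noteq> {}}"
  show "Hist E J I \<subseteq> Prime {f \<in> ExtHist E J I. dom f \<noteq> {}}"
  proof
    fix f assume "f \<in> Hist E J I"
    then obtain x where x: "x \<in> E" "dom f = down J x" and V: "\<forall>w\<in>dom f. the (f w) \<in> I w"
      unfolding Hist_def prod_on_def by blast
    have L: "dom f \<in> lowersets E J" and xd: "x \<in> dom f" using co_down_low[OF co x(1)] x by auto
    have inW: "f \<in> ?W" using L V xd by (auto simp: ExtHist_iff)
    have key: "f \<in> F" if F: "F \<subseteq> ?W" "compatible F" "f = map_join F" for F
    proof -
      have "x \<in> dom (map_join F)" using xd F(3) by simp
      then obtain g where g: "g \<in> F" "x \<in> dom g" unfolding mj_dom by blast
      have Lg: "dom g \<in> lowersets E J" using F(1) g by (auto simp: ExtHist_iff)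
      have "dom g \<subseteq> dom f" unfolding F(3) mj_dom using g(1) by blast
      moreover have "dom f \<subseteq> dom g" using x(2) low_down_sub[OF Lg g(2)] by simp
      ultimately have dd: "dom g = dom f" by blast
      have "g = f"
      proof (rule ext)
        fix y show "g y = f y"
        proof (cases "y \<in> dom g")
          case True
          then obtain z where "g y = Some z" by auto
          then show ?thesis using mj_val[OF F(2) g(1)] F(3) by simp
        next
          case False then show ?thesis using dd by auto
        qed
      qed
      then show ?thesis using g by simp
    qed
    show "f \<in> Prime {f \<in> ExtHist E J I. dom f \<noteq> {}}" unfolding Prime_def
    proof (rule CollectI, rule conjI)
      show "f \<in> ?W" by (rule inW)
    next
      show "\<forall>F. F \<subseteq> ?W \<and> compatible F \<and> f = map_join F \<longrightarrow> f \<in> F"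
        using key by blast
    qed
  qed
qed

lemma join_co:
  assumes "causal_order E R" "causal_order E R'"
  shows "causal_order E (order_join R R')"
proof -
  have "R \<union> R' \<subseteq> E \<times> E" using assms unfolding causal_order_def by blast
  then have "(R \<union> R')\<^sup>+ \<subseteq> E \<times> E" using trancl_subset_Sigma by blast
  then show ?thesis using assms unfolding causal_order_def order_join_def
    by (auto simp: trans_trancl)
qed

lemma low_join: "lowersets E (order_join R R') = lowersets E R \<inter> lowersets E R'"
proof
  show "lowersets E (order_join R R') \<subseteq> lowersets E R \<inter> lowersets E R'"
    unfolding lowersets_def order_join_def by blast
next
  show "lowersets E R \<inter> lowersets E R' \<subseteq> lowersets E (order_join R R')"
  proof
    fix U assume U: "U \<in> lowersets E R \<inter> lowersets E R'"
    have "(x, w) \<in> (R \<union> R')\<^sup>+ \<Longrightarrow> w \<in> U \<longrightarrow> x \<in> U" for x w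
    proof (induction rule: trancl_induct)
      case (base y) then show ?case using U unfolding lowersets_def by blast
    next
      case (step y z) then show ?case using U unfolding lowersets_def by blast
    qed
    then show "U \<in> lowersets E (order_join R R')"
      using U unfolding lowersets_def order_join_def by blast
  qed
qed

theorem proposition8:
  fixes E :: "'a set" and I :: "'a \<Rightarrow> 'b set" and R R' :: "('a \<times> 'a) set"
  assumes "finite E"
    and "\<And>w. w \<in> E \<Longrightarrow> I w \<noteq> {} \<and> finite (I w)"
    and "causal_order E R" and "causal_order E R'"
  shows "ExtHist E R I \<inter> ExtHist E R' I = ExtHist E (order_join R R') I
         \<and> hist_join (Hist E R I) (Hist E R' I) = Hist E (order_join R R') I"
proof
  show P1: "ExtHist E R I \<inter> ExtHist E R' I = ExtHist E (order_join R R') I"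
  proof (rule set_eqI)
    fix f
    show "f \<in> ExtHist E R I \<inter> ExtHist E R' I \<longleftrightarrow> f \<in> ExtHist E (order_join R R') I"
      unfolding Int_iff ExtHist_iff low_join by blast
  qed
  have "Ext (Hist E R I) \<inter> Ext (Hist E R' I) = {f \<in> ExtHist E (order_join R R') I. dom f \<noteq> {}}"
    unfolding Ext_Hist[OF assms(3)] Ext_Hist[OF assms(4)] P1[symmetric] by blast
  then show "hist_join (Hist E R I) (Hist E R' I) = Hist E (order_join R R') I"
    unfolding hist_join_def using Prime_Hist[OF join_co[OF assms(3,4)]] by simp
qed

end
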